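(* Every MG-space is homeomorphic to a decomposition space of some locally Menger space.
   Context: A space $X$ is Menger if for each sequence $(\mathcal{U}_n)$ of open covers of $X$ there is a sequence $(\mathcal{V}_n)$ with each $\mathcal{V}_n$ a finite subset of $\mathcal{U}_n$ and $\bigcup_{n}\bigcup\mathcal{V}_n=X$. A space $X$ is locally Menger if for each $x\in X$ there exist an open set $U$ and a Menger subspace $Y$ of $X$ with $x\in U\subseteq Y$. A space $X$ is Menger generated (an MG-space) if a subset $U\subseteq X$ is open in $X$ whenever $U\cap M$ is open in $M$ for every Menger subspace $M$ of $X$. A decomposition of a space $X$ is a partition $\mathcal{D}$ of $X$; with the decomposition map $\varphi:X\to\mathcal{D}$ sending $x$ to the member of $\mathcal{D}$ containing $x$, $\mathcal{D}$ is topologized by declaring $\mathcal{U}\subseteq\mathcal{D}$ open iff $\varphi^{-1}(\mathcal{U})$ is open in $X$; this is the decomposition space. *)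

theory Defs
  imports "HOL-Analysis.Analysis" "HOL-Library.Disjoint_Sets"
begin

definition menger_space :: "'a topology \<Rightarrow> bool" where
  "menger_space X \<longleftrightarrow>
     (\<forall>\<U> :: nat \<Rightarrow> 'a set set.
        (\<forall>n. (\<forall>V\<in>\<U> n. openin X V) \<and> topspace X \<subseteq> \<Union>(\<U> n)) \<longrightarrow>
        (\<exists>\<V> :: nat \<Rightarrow> 'a set set. (\<forall>n. finite (\<V> n) \<and> \<V> n \<subseteq> \<U> n) \<and>
              topspace X \<subseteq> (\<Union>n. \<Union>(\<V> n))))"

definition menger_subspace :: "'a topology \<Rightarrow> 'a set \<Rightarrow> bool" where
  "menger_subspace X M \<longleftrightarrow> M \<subseteq> topspace X \<and> menger_space (subtopology X M)"

definition locally_menger :: "'a topology \<Rightarrow> bool" where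
  "locally_menger X \<longleftrightarrow>
     (\<forall>x\<in>topspace X. \<exists>U Y. openin X U \<and> menger_subspace X Y \<and> x \<in> U \<and> U \<subseteq> Y)"

definition menger_generated :: "'a topology \<Rightarrow> bool" where
  "menger_generated X \<longleftrightarrow>
     (\<forall>U. U \<subseteq> topspace X \<longrightarrow>
        (\<forall>M. menger_subspace X M \<longrightarrow> openin (subtopology X M) (U \<inter> M)) \<longrightarrow>
        openin X U)"

text \<open>Decomposition space of a partition D of the points of Y: a family of blocks
  is open iff the union of its members (its preimage under the decomposition map) is open.\<close>
definition decomposition_space :: "'a topology \<Rightarrow> 'a set set \<Rightarrow> 'a set topology" where
  "decomposition_space Y D = topology (\<lambda>\<U>. \<U> \<subseteq> D \<and> openin Y (\<Union>\<U>))"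

end

theory Submission
  imports Defs
begin

lemma istop_decomp:
  assumes "disjoint D"
  shows "istopology (\<lambda>\<U>. \<U> \<subseteq> D \<and> openin Y (\<Union>\<U>))"
  unfolding istopology_def
proof (rule conjI; intro allI impI ballI)
  fix S T assume S: "S \<subseteq> D \<and> openin Y (\<Union>S)" and T: "T \<subseteq> D \<and> openin Y (\<Union>T)"
  have "\<Union>(S \<inter> T) = \<Union>S \<inter> \<Union>T"
  proof (rule equalityI)
    show "\<Union>S \<inter> \<Union>T \<subseteq> \<Union>(S \<inter> T)"
    proof
      fix x assume "x \<in> \<Union>S \<inter> \<Union>T"
      then obtain A B where "A \<in> S" "B \<in> T" "x \<in> A" "x \<in> B" by blast
      moreover have "A \<in> D" "B \<in> D" using S T \<open>A \<in> S\<close> \<open>B \<in> T\<close> by auto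
      ultimately have "A = B" using assms by (metis disjointD IntI empty_iff)
      with \<open>A \<in> S\<close> \<open>B \<in> T\<close> \<open>x \<in> A\<close> show "x \<in> \<Union>(S \<inter> T)" by blast
    qed
    show "\<Union>(S \<inter> T) \<subseteq> \<Union>S \<inter> \<Union>T" by blast
  qed
  then show "S \<inter> T \<subseteq> D \<and> openin Y (\<Union>(S \<inter> T))" using S T by auto
next
  fix K assume H: "\<forall>S\<in>K. S \<subseteq> D \<and> openin Y (\<Union>S)"
  have "\<Union>(\<Union>K) = (\<Union>S\<in>K. \<Union>S)" by blast
  moreover have "openin Y (\<Union>S\<in>K. \<Union>S)" using H by (intro openin_Union) auto
  ultimately show "\<Union>K \<subseteq> D \<and> openin Y (\<Union>(\<Union>K))" using H by auto
qed

lemma menger_image: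
  assumes f: "continuous_map X Y f" and s: "f ` topspace X = topspace Y" and m: "menger_space X"
  shows "menger_space Y"
  unfolding menger_space_def
proof (intro allI impI)
  fix \<U> :: "nat \<Rightarrow> _" assume U: "\<forall>n. (\<forall>V\<in>\<U> n. openin Y V) \<and> topspace Y \<subseteq> \<Union>(\<U> n)"
  define P where "P V = {x \<in> topspace X. f x \<in> V}" for V
  have "\<forall>n. (\<forall>V\<in>P ` \<U> n. openin X V) \<and> topspace X \<subseteq> \<Union>(P ` \<U> n)"
  proof (intro allI conjI)
    fix n show "\<forall>V\<in>P ` \<U> n. openin X V" using U f unfolding P_def
      by (auto intro: openin_continuous_map_preimage)
    show "topspace X \<subseteq> \<Union>(P ` \<U> n)"
    proof
      fix x assume x: "x \<in> topspace X"
      then have "f x \<in> topspace Y" using s by blast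
      then obtain V where "V \<in> \<U> n" "f x \<in> V" using U by blast
      then show "x \<in> \<Union>(P ` \<U> n)" using x unfolding P_def by blast
    qed
  qed
  then obtain \<W> where W: "\<forall>n. finite (\<W> n) \<and> \<W> n \<subseteq> P ` \<U> n"
    and cov: "topspace X \<subseteq> (\<Union>n. \<Union>(\<W> n))"
    using m unfolding menger_space_def by (elim allE[of _ "\<lambda>n. P ` \<U> n"]) blast
  have "\<forall>n. \<exists>C. C \<subseteq> \<U> n \<and> finite C \<and> \<W> n = P ` C"
    using W by (metis finite_subset_image)
  then obtain C where C: "\<And>n. C n \<subseteq> \<U> n \<and> finite (C n) \<and> \<W> n = P ` C n" by metis
  show "\<exists>\<V>. (\<forall>n. finite (\<V> n) \<and> \<V> n \<subseteq> \<U> n) \<and> topspace Y \<subseteq> (\<Union>n. \<Union>(\<V> n))"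
  proof (intro exI conjI allI)
    fix n show "finite (C n)" "C n \<subseteq> \<U> n" using C by auto
  next
    show "topspace Y \<subseteq> (\<Union>n. \<Union>(C n))"
    proof
      fix y assume "y \<in> topspace Y"
      then obtain x where x: "x \<in> topspace X" "y = f x" using s by blast
      then obtain n where "x \<in> \<Union>(\<W> n)" using cov by blast
      then obtain V where "V \<in> C n" "x \<in> P V" using C by auto
      then show "y \<in> (\<Union>n. \<Union>(C n))" using x unfolding P_def by blast
    qed
  qed
qed

lemma menger_singleton:
  assumes "x \<in> topspace X"
  shows "menger_subspace X {x}"
  unfolding menger_subspace_def menger_space_def
proof (intro conjI allI impI)
  show "{x} \<subseteq> topspace X" using assms by simp
  fix \<U> :: "nat \<Rightarrow> _" assume U: "\<forall>n. (\<forall>V\<in>\<U> n. openin (subtopology X {x}) V) \<and> topspace (subtopology X {x}) \<subseteq> \<Union>(\<U> n)"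
  then obtain V where V: "V \<in> \<U> 0" "x \<in> V" using assms by auto
  show "\<exists>\<V>. (\<forall>n. finite (\<V> n) \<and> \<V> n \<subseteq> \<U> n) \<and> topspace (subtopology X {x}) \<subseteq> (\<Union>n. \<Union>(\<V> n))"
    by (rule exI[of _ "\<lambda>n. if n = 0 then {V} else {}"]) (use V in auto)
qed

theorem theorem4p24:
  fixes X :: "'a topology"
  assumes "menger_generated X"
  shows "\<exists>(Y :: ('a set \<times> 'a) topology) D.
           locally_menger Y \<and> partition_on (topspace Y) D \<and>
           X homeomorphic_space decomposition_space Y D"
proof -
  define I where "I = {M. menger_subspace X M}"
  define Y where "Y = sum_topology (subtopology X) I"
  define f where "f x = {(M,x) | M. M \<in> I \<and> x \<in> M}" for x
  define D where "D = f ` topspace X"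
  have IX: "M \<subseteq> topspace X" if "M \<in> I" for M using that unfolding I_def menger_subspace_def by blast
  have tY: "topspace Y = Sigma I (\<lambda>M. M)"
    unfolding Y_def topspace_sum_topology o_def
    by (rule Sigma_cong) (simp_all add: IX Int_absorb1 topspace_subtopology)
  have sI: "{x} \<in> I" if "x \<in> topspace X" for x using menger_singleton[OF that] by (simp add: I_def)
  have fmem: "p \<in> f x \<longleftrightarrow> fst p \<in> I \<and> x \<in> fst p \<and> snd p = x" for p x
    unfolding f_def by force
  have finj: "x = y" if e: "f x = f y" and x: "x \<in> topspace X" for x y
  proof -
    have "({x},x) \<in> f x" using sI[OF x] fmem[of "({x},x)" x] by simp
    then have "({x},x) \<in> f y" by (metis e)
    then show "x = y" by (metis fmem snd_conv)
  qed
  have disj: "disjoint D"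
    unfolding D_def pairwise_def disjnt_def
  proof (intro ballI impI)
    fix A B assume "A \<in> f ` topspace X" "B \<in> f ` topspace X" "A \<noteq> B"
    then obtain x y where xy0: "A = f x" "B = f y" by (meson imageE)
    then have xy: "A = f x" "B = f y" "x \<noteq> y" using \<open>A \<noteq> B\<close> by auto
    show "A \<inter> B = {}"
    proof (rule ccontr)
      assume "A \<inter> B \<noteq> {}"
      then obtain p where "p \<in> f x" "p \<in> f y" using xy by blast
      then have "snd p = x" "snd p = y" by (metis fmem)+
      then show False using xy by simp
    qed
  qed
  have part: "partition_on (topspace Y) D"
    unfolding partition_on_def
  proof (intro conjI disj)
    show "\<Union>D = topspace Y" unfolding tY D_def by (auto simp: fmem intro: IX[THEN subsetD])
    have "({x},x) \<in> f x" if "x \<in> topspace X" for x using sI[OF that] by (simp add: fmem)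
    then show "{} \<notin> D" unfolding D_def by blast
  qed
  define Z where "Z = decomposition_space Y D"
  have oZ: "openin Z \<U> \<longleftrightarrow> \<U> \<subseteq> D \<and> openin Y (\<Union>\<U>)" for \<U>
    unfolding Z_def decomposition_space_def using istop_decomp[OF disj] by simp
  have tZ: "topspace Z = D"
  proof -
    have "openin Z D" unfolding oZ using part by (simp add: partition_on_def)
    then have "D \<subseteq> topspace Z" by (rule openin_subset)
    moreover have "topspace Z \<subseteq> D" using oZ[of "topspace Z"] by simp
    ultimately show ?thesis by blast
  qed
  have Uf: "\<Union>(f ` U) = Sigma I (\<lambda>M. U \<inter> M)" for U
    by (auto simp: fmem)
  have homeo: "homeomorphic_map X Z f"
  proof (rule bijective_open_imp_homeomorphic_map)
    show "f ` topspace X = topspace Z" using tZ D_def by simp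
    show "inj_on f (topspace X)" using finj by (meson inj_onI)
    show "open_map X Z f"
      unfolding open_map_def
    proof (intro allI impI)
      fix U assume U: "openin X U"
      have "f ` U \<subseteq> D" using openin_subset[OF U] D_def by auto
      moreover have "openin Y (\<Union>(f ` U))" unfolding Uf Y_def openin_disjoint_union
        using U by (auto intro: openin_subtopology_Int2 simp: Int_commute openin_subtopology)
      ultimately show "openin Z (f ` U)" using oZ by blast
    qed
    show "continuous_map X Z f"
      unfolding continuous_map_def
    proof (intro conjI allI impI Pi_I)
      fix x assume "x \<in> topspace X" then show "f x \<in> topspace Z" using tZ D_def by simp
    next
      fix \<U> assume U: "openin Z \<U>"
      then have UD: "\<U> \<subseteq> D" and UO: "openin Y (\<Union>\<U>)" using oZ by auto
      let ?P = "{x \<in> topspace X. f x \<in> \<U>}"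
      show "openin X ?P"
      proof (rule assms[unfolded menger_generated_def, rule_format])
        show "?P \<subseteq> topspace X" by blast
        fix M assume M: "menger_subspace X M"
        then have MI: "M \<in> I" by (simp add: I_def)
        have "openin (subtopology X M) {x. (M,x) \<in> \<Union>\<U>}"
          using UO MI unfolding Y_def openin_sum_topology by auto
        moreover have "{x. (M,x) \<in> \<Union>\<U>} = ?P \<inter> M"
        proof
          show "{x. (M,x) \<in> \<Union>\<U>} \<subseteq> ?P \<inter> M"
          proof
            fix x assume "x \<in> {x. (M,x) \<in> \<Union>\<U>}"
            then obtain B where B: "B \<in> \<U>" "(M,x) \<in> B" by blast
            then obtain y where y: "y \<in> topspace X" "B = f y" using UD D_def by blast
            then have "x = y" "x \<in> M" using B by (auto simp: fmem)
            then show "x \<in> ?P \<inter> M" using y B by auto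
          qed
          show "?P \<inter> M \<subseteq> {x. (M,x) \<in> \<Union>\<U>}"
          proof
            fix x assume x: "x \<in> ?P \<inter> M"
            then have "(M,x) \<in> f x" using MI fmem[of "(M,x)" x] by simp
            then show "x \<in> {x. (M,x) \<in> \<Union>\<U>}" using x by blast
          qed
        qed
        ultimately show "openin (subtopology X M) (?P \<inter> M)" by simp
      qed
    qed
  qed
  have lm: "locally_menger Y"
    unfolding locally_menger_def
  proof
    fix p assume p: "p \<in> topspace Y"
    obtain M x where pe: "p = (M,x)" and MI: "M \<in> I" and xM: "x \<in> M" using p tY by auto
    let ?U = "Sigma {M} (\<lambda>_. M)"
    have sub: "?U \<subseteq> topspace Y" using tY MI by auto
    have oU: "openin Y ?U"
    proof -
      have "openin (subtopology X M) M" using openin_topspace[of "subtopology X M"] IX[OF MI]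
        by (simp add: Int_absorb1)
      then show ?thesis
        unfolding Y_def openin_sum_topology using MI
        by (auto simp: Collect_conj_eq intro: IX[THEN subsetD])
    qed
    have ms: "menger_subspace Y ?U"
      unfolding menger_subspace_def
    proof (intro conjI sub)
      have c: "continuous_map (subtopology X M) (subtopology Y ?U) (\<lambda>x. (M,x))"
        unfolding Y_def
        by (rule continuous_map_into_subtopology[OF continuous_map_component_injection[OF MI]])
           (use IX[OF MI] in auto)
      have "(\<lambda>x. (M,x)) ` topspace (subtopology X M) = topspace (subtopology Y ?U)"
        using sub IX[OF MI] by (auto simp: topspace_subtopology_subset)
      moreover have "menger_space (subtopology X M)" using MI by (simp add: I_def menger_subspace_def)
      ultimately show "menger_space (subtopology Y ?U)" using menger_image[OF c] by blast
    qed
    show "\<exists>U Y'. openin Y U \<and> menger_subspace Y Y' \<and> p \<in> U \<and> U \<subseteq> Y'"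
      using oU ms pe xM by blast
  qed
  show ?thesis
    using lm part homeo by (auto simp: Z_def homeomorphic_space)
qed

end
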